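(* Let $\mathcal{X}\subseteq\mathbb{R}^{n_x}$, $\mathcal{U}\subseteq\mathbb{R}^{n_u}$ non-empty, compact and convex, and $\mathcal{E}\subseteq\mathbb{R}^{n_x}$. Let $f(x,u)=f_x(x)+f_u(x)u$ and $\hat f(x,u)=\hat f_x(x)+\hat f_u(x)u$ with $f_x,\hat f_x:\mathcal{X}\to\mathbb{R}^{n_x}$, $f_u,\hat f_u:\mathcal{X}\to\mathbb{R}^{n_x\times n_u}$, and assume $f(x,u)-\hat f(x,u)\in\mathcal{E}$ for all $(x,u)\in\mathcal{X}\times\mathcal{U}$. Let $\pi:\mathcal{X}\times\mathcal{E}\to\mathcal{U}$ be of the form $\pi(x,e)=\pi_x(x)+\pi_e(x)e$ with $\pi_x:\mathcal{X}\to\mathbb{R}^{n_u}$, $\pi_e:\mathcal{X}\to\mathbb{R}^{n_u\times n_x}$. Then for every $x\in\mathcal{X}$, the set of $u\in\mathcal{U}$ satisfying $$u=\pi_x(x)+\pi_e(x)\Big(f_x(x)-\hat f_x(x)+\big(f_u(x)-\hat f_u(x)\big)u\Big)$$ is non-empty, coincides with the set of solutions of $u=\pi(x,f(x,u)-\hat f(x,u))$, $u\in\mathcal{U}$, and is convex (so a solution is obtained by a convex feasibility program). If moreover $\mathcal{U}$ is a polytope, this feasibility problem is a linear program.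
   Context: The equation $u=\pi(x,f(x,u)-\hat f(x,u))$, $u\in\mathcal{U}$, is the concretization problem for the informed policy $\pi$ at state $x$. *)

theory Defs
  imports "HOL-Analysis.Analysis"
begin

definition aff_dyn ::
  "(real^'nx \<Rightarrow> real^'nx) \<Rightarrow> (real^'nx \<Rightarrow> real^'nu^'nx) \<Rightarrow> real^'nx \<Rightarrow> real^'nu \<Rightarrow> real^'nx"
  where "aff_dyn fx fu x u = fx x + fu x *v u"

definition aff_pol ::
  "(real^'nx \<Rightarrow> real^'nu) \<Rightarrow> (real^'nx \<Rightarrow> real^'nx^'nu) \<Rightarrow> real^'nx \<Rightarrow> real^'nx \<Rightarrow> real^'nu"
  where "aff_pol px pe x e = px x + pe x *v e"

end

theory Submission
  imports Defs
begin

theorem theorem4: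
  fixes X :: "(real^'nx) set" and U :: "(real^'nu) set" and E :: "(real^'nx) set"
    and fx fhx :: "real^'nx \<Rightarrow> real^'nx"
    and fu fhu :: "real^'nx \<Rightarrow> real^'nu^'nx"
    and px :: "real^'nx \<Rightarrow> real^'nu"
    and pe :: "real^'nx \<Rightarrow> real^'nx^'nu"
  assumes X: "X \<noteq> {}" "compact X" "convex X"
    and U: "U \<noteq> {}" "compact U" "convex U"
    and err: "\<And>x u. x \<in> X \<Longrightarrow> u \<in> U \<Longrightarrow> aff_dyn fx fu x u - aff_dyn fhx fhu x u \<in> E"
    and pol: "\<And>x e. x \<in> X \<Longrightarrow> e \<in> E \<Longrightarrow> aff_pol px pe x e \<in> U"
  shows "\<forall>x\<in>X.
    (let S = {u \<in> U. u = px x + pe x *v (fx x - fhx x + (fu x - fhu x) *v u)} in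
       S \<noteq> {}
     \<and> S = {u \<in> U. u = aff_pol px pe x (aff_dyn fx fu x u - aff_dyn fhx fhu x u)}
     \<and> convex S
     \<and> (polytope U \<longrightarrow> polyhedron S))"
proof
  fix x assume xX: "x \<in> X"
  define c where "c = px x + pe x *v (fx x - fhx x)"
  define M where "M = pe x ** (fu x - fhu x)"
  define g where "g = (\<lambda>u. px x + pe x *v (fx x - fhx x + (fu x - fhu x) *v u))"
  have gM: "g u = c + M *v u" for u
    by (simp add: g_def c_def M_def matrix_vector_right_distrib matrix_vector_mul_assoc add.assoc)
  have dyn: "aff_dyn fx fu x u - aff_dyn fhx fhu x u = fx x - fhx x + (fu x - fhu x) *v u" for u
    by (simp add: aff_dyn_def matrix_vector_mult_diff_rdistrib algebra_simps)
  have gpol: "g u = aff_pol px pe x (aff_dyn fx fu x u - aff_dyn fhx fhu x u)" for u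
    by (simp add: dyn aff_pol_def g_def)
  have gU: "g \<in> U \<rightarrow> U"
    using pol[OF xX] err[OF xX] by (auto simp: gpol)
  have contg: "continuous_on U g"
    unfolding gM by (intro continuous_intros linear_continuous_on matrix_vector_mul_linear)
  obtain u where "u \<in> U" "g u = u" using brouwer[OF U(2) U(3) U(1) contg gU] by blast
  have S1: "{u \<in> U. u = px x + pe x *v (fx x - fhx x + (fu x - fhu x) *v u)} = U \<inter> {u. u = g u}"
    by (auto simp: g_def)
  have aff: "affine {u. u = g u}"
    unfolding affine_def
  proof (intro ballI allI impI)
    fix y z :: "real^'nu" and a b :: real
    assume "y \<in> {u. u = g u}" "z \<in> {u. u = g u}" "a + b = 1"
    hence y: "y = c + M *v y" and z: "z = c + M *v z" and ab: "a + b = 1" by (auto simp: gM)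
    have "g (a *\<^sub>R y + b *\<^sub>R z) = c + a *\<^sub>R (M *v y) + b *\<^sub>R (M *v z)"
      by (simp add: gM algebra_simps)
    also have "\<dots> = (a + b) *\<^sub>R c + a *\<^sub>R (M *v y) + b *\<^sub>R (M *v z)"
      by (simp add: ab)
    also have "\<dots> = a *\<^sub>R (c + M *v y) + b *\<^sub>R (c + M *v z)"
      by (simp add: algebra_simps)
    also have "\<dots> = a *\<^sub>R y + b *\<^sub>R z" using y z by simp
    finally show "a *\<^sub>R y + b *\<^sub>R z \<in> {u. u = g u}" by simp
  qed
  show "let S = {u \<in> U. u = px x + pe x *v (fx x - fhx x + (fu x - fhu x) *v u)} in
       S \<noteq> {}
     \<and> S = {u \<in> U. u = aff_pol px pe x (aff_dyn fx fu x u - aff_dyn fhx fhu x u)}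
     \<and> convex S
     \<and> (polytope U \<longrightarrow> polyhedron S)"
    unfolding Let_def S1
  proof (intro conjI impI)
    show "U \<inter> {u. u = g u} \<noteq> {}" using \<open>u \<in> U\<close> \<open>g u = u\<close> by auto
    show "U \<inter> {u. u = g u} = {u \<in> U. u = aff_pol px pe x (aff_dyn fx fu x u - aff_dyn fhx fhu x u)}"
      by (auto simp: gpol)
    show "convex (U \<inter> {u. u = g u})" using U(3) affine_imp_convex[OF aff] by (rule convex_Int)
    assume "polytope U"
    thus "polyhedron (U \<inter> {u. u = g u})"
      using polytope_imp_polyhedron affine_imp_polyhedron[OF aff] by blast
  qed
qed

end
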